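(* Let $m,n\geq2$ and let $\mathbf p\in\mathbb R^m$, $\mathbf q\in\mathbb R^n$ be probability vectors with all entries strictly positive. If $P\in\mathcal C(\mathbf p,\mathbf q)$ is local optimal, then $m+n-\kappa(\mathbf p,\mathbf q)\leq|V(P)|\leq m+n-1$.
   Context: $\mathcal C(\mathbf p,\mathbf q)$: nonnegative $m\times n$ matrices $P=(p_{i,j})$ with row sums $p_i$, column sums $q_j$. $V(P)=\{(i,j):p_{i,j}\neq0\}$. $H(A)=-\sum a_{i,j}\log a_{i,j}$ ($0\log0=0$). Structure constant: for $\sigma\in\Sigma_m$ let $F_{\sigma\mathbf p}(i)=\sum_{k\le i}p_{\sigma(k)}$; $\kappa(\mathbf p,\mathbf q)=\max_{(\sigma,\pi)\in\Sigma_m\times\Sigma_n}|\{F_{\sigma\mathbf p}(i):1\le i<m\}\cap\{F_{\pi\mathbf q}(j):1\le j<n\}|+1$. Moves on $P$ (each yields $P'\in\mathcal C(\mathbf p,\mathbf q)$ by replacing the chosen submatrix $A$ by $A'$): (M1) choose distinct rows $i_1,i_2$ and distinct columns $j_1,j_2$, $a_{s,t}=p_{i_s,j_t}$; if $\max(a_{1,1},a_{2,2})\ge\max(a_{1,2},a_{2,1})$, put $b=\min(a_{1,2},a_{2,1})$, $a'_{s,s}=a_{s,s}+b$, $a'_{1,2}=a_{1,2}-b$, $a'_{2,1}=a_{2,1}-b$. (M2) same replacement, allowed when $a_{1,1}+a_{1,2}\ge a_{2,1}+a_{2,2}$, $a_{1,1}+a_{2,1}\ge a_{1,2}+a_{2,2}$,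 $a_{1,2}\ge a_{2,1}$. (M3) distinct rows $i_1,i_2$, distinct columns $j_1,\dots,j_r$ ($r\ge2$), $a_{s,k}=p_{i_s,j_k}$, allowed when $a_{2,k}=0$ for $k\ge2$ and $\sum_{k\ge2}a_{1,k}\le a_{2,1}\le\sum_{k\ge1}a_{1,k}$; replace by $a'_{1,1}=\sum_ka_{1,k}$, $a'_{1,k}=0$, $a'_{2,1}=a_{2,1}-\sum_{k\ge2}a_{1,k}$, $a'_{2,k}=a_{1,k}$ ($k\ge2$); moves may also be applied with rows and columns exchanged. $P$ is local optimal if no such move produces $P'$ with $H(P')<H(P)$. *)

theory Defs
  imports Complex_Main "HOL-Combinatorics.Permutations"
begin

text \<open>Matrices are functions nat => nat => real; an m x n matrix uses indices i < m, j < n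
 (0-based). Vectors p, q are nat => real with indices < m resp. < n.\<close>

definition coupling :: "nat \<Rightarrow> nat \<Rightarrow> (nat \<Rightarrow> real) \<Rightarrow> (nat \<Rightarrow> real) \<Rightarrow> (nat \<Rightarrow> nat \<Rightarrow> real) \<Rightarrow> bool" where
  "coupling m n p q P \<longleftrightarrow>
     (\<forall>i<m. \<forall>j<n. P i j \<ge> 0) \<and>
     (\<forall>i<m. (\<Sum>j<n. P i j) = p i) \<and>
     (\<forall>j<n. (\<Sum>i<m. P i j) = q j)"

definition supp :: "nat \<Rightarrow> nat \<Rightarrow> (nat \<Rightarrow> nat \<Rightarrow> real) \<Rightarrow> (nat \<times> nat) set" where
  "supp m n P = {(i, j). i < m \<and> j < n \<and> P i j \<noteq> 0}"

text \<open>Entropy; note ln 0 = 0 in Isabelle, so 0 * ln 0 = 0.\<close>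
definition entropy :: "nat \<Rightarrow> nat \<Rightarrow> (nat \<Rightarrow> nat \<Rightarrow> real) \<Rightarrow> real" where
  "entropy m n P = - (\<Sum>i<m. \<Sum>j<n. P i j * ln (P i j))"


definition prob_vec :: "nat \<Rightarrow> (nat \<Rightarrow> real) \<Rightarrow> bool" where
  "prob_vec m p \<longleftrightarrow> (\<forall>i<m. p i > 0) \<and> (\<Sum>i<m. p i) = 1"

definition partial_sums :: "nat \<Rightarrow> (nat \<Rightarrow> real) \<Rightarrow> (nat \<Rightarrow> nat) \<Rightarrow> real set" where
  "partial_sums m p \<sigma> = {(\<Sum>k<i. p (\<sigma> k)) | i. 1 \<le> i \<and> i < m}"

definition kappa :: "nat \<Rightarrow> nat \<Rightarrow> (nat \<Rightarrow> real) \<Rightarrow> (nat \<Rightarrow> real) \<Rightarrow> nat" where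
  "kappa m n p q = Max {card (partial_sums m p \<sigma> \<inter> partial_sums n q \<pi>) | \<sigma> \<pi>.
                         \<sigma> permutes {..<m} \<and> \<pi> permutes {..<n}} + 1"

definition swap2 :: "(nat \<Rightarrow> nat \<Rightarrow> real) \<Rightarrow> nat \<Rightarrow> nat \<Rightarrow> nat \<Rightarrow> nat \<Rightarrow> nat \<Rightarrow> nat \<Rightarrow> real" where
  "swap2 P i1 i2 j1 j2 = (let b = min (P i1 j2) (P i2 j1) in
     (\<lambda>i j. if (i = i1 \<and> j = j1) \<or> (i = i2 \<and> j = j2) then P i j + b
            else if (i = i1 \<and> j = j2) \<or> (i = i2 \<and> j = j1) then P i j - b
            else P i j))"

definition move1 :: "nat \<Rightarrow> nat \<Rightarrow> (nat \<Rightarrow> nat \<Rightarrow> real) \<Rightarrow> (nat \<Rightarrow> nat \<Rightarrow> real) \<Rightarrow> bool" where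
  "move1 m n P P' \<longleftrightarrow> (\<exists>i1 i2 j1 j2. i1 < m \<and> i2 < m \<and> i1 \<noteq> i2 \<and> j1 < n \<and> j2 < n \<and> j1 \<noteq> j2 \<and>
     max (P i1 j1) (P i2 j2) \<ge> max (P i1 j2) (P i2 j1) \<and> P' = swap2 P i1 i2 j1 j2)"

definition move2 :: "nat \<Rightarrow> nat \<Rightarrow> (nat \<Rightarrow> nat \<Rightarrow> real) \<Rightarrow> (nat \<Rightarrow> nat \<Rightarrow> real) \<Rightarrow> bool" where
  "move2 m n P P' \<longleftrightarrow> (\<exists>i1 i2 j1 j2. i1 < m \<and> i2 < m \<and> i1 \<noteq> i2 \<and> j1 < n \<and> j2 < n \<and> j1 \<noteq> j2 \<and>
     P i1 j1 + P i1 j2 \<ge> P i2 j1 + P i2 j2 \<and>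
     P i1 j1 + P i2 j1 \<ge> P i1 j2 + P i2 j2 \<and>
     P i1 j2 \<ge> P i2 j1 \<and> P' = swap2 P i1 i2 j1 j2)"

text \<open>(M3): columns j_1 = j1 and {j_2,...,j_r} = J, a nonempty set of columns not containing j1.\<close>
definition move3 :: "nat \<Rightarrow> nat \<Rightarrow> (nat \<Rightarrow> nat \<Rightarrow> real) \<Rightarrow> (nat \<Rightarrow> nat \<Rightarrow> real) \<Rightarrow> bool" where
  "move3 m n P P' \<longleftrightarrow> (\<exists>i1 i2 j1 J. i1 < m \<and> i2 < m \<and> i1 \<noteq> i2 \<and> j1 < n \<and>
     J \<subseteq> {..<n} \<and> J \<noteq> {} \<and> j1 \<notin> J \<and>
     (\<forall>j\<in>J. P i2 j = 0) \<and>
     (\<Sum>j\<in>J. P i1 j) \<le> P i2 j1 \<and> P i2 j1 \<le> P i1 j1 + (\<Sum>j\<in>J. P i1 j) \<and>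
     P' = (\<lambda>i j. if i = i1 \<and> j = j1 then P i1 j1 + (\<Sum>k\<in>J. P i1 k)
                 else if i = i1 \<and> j \<in> J then 0
                 else if i = i2 \<and> j = j1 then P i2 j1 - (\<Sum>k\<in>J. P i1 k)
                 else if i = i2 \<and> j \<in> J then P i1 j
                 else P i j))"

definition row_move :: "nat \<Rightarrow> nat \<Rightarrow> (nat \<Rightarrow> nat \<Rightarrow> real) \<Rightarrow> (nat \<Rightarrow> nat \<Rightarrow> real) \<Rightarrow> bool" where
  "row_move m n P P' \<longleftrightarrow> move1 m n P P' \<or> move2 m n P P' \<or> move3 m n P P'"

definition move :: "nat \<Rightarrow> nat \<Rightarrow> (nat \<Rightarrow> nat \<Rightarrow> real) \<Rightarrow> (nat \<Rightarrow> nat \<Rightarrow> real) \<Rightarrow> bool" where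
  "move m n P P' \<longleftrightarrow> row_move m n P P' \<or>
     row_move n m (\<lambda>j i. P i j) (\<lambda>j i. P' i j)"

definition local_optimal :: "nat \<Rightarrow> nat \<Rightarrow> (nat \<Rightarrow> real) \<Rightarrow> (nat \<Rightarrow> real) \<Rightarrow> (nat \<Rightarrow> nat \<Rightarrow> real) \<Rightarrow> bool" where
  "local_optimal m n p q P \<longleftrightarrow> coupling m n p q P \<and>
     \<not> (\<exists>P'. move m n P P' \<and> entropy m n P' < entropy m n P)"

end

theory Submission
  imports Defs
begin


lemma g_incr_strict:
  fixes x y h :: real
  assumes "0 \<le> x" "x < y" "0 < h"
  shows "(x+h)*ln(x+h) - x*ln x < (y+h)*ln(y+h) - y*ln y"
proof (cases "x = 0")
  case True
  have y: "y > 0" using assms True by simp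
  have "ln y < ln (y+h)" using y assms by simp
  moreover have "ln h < ln (y+h)" using y assms by simp
  ultimately have "y * ln y + h * ln h < y * ln (y+h) + h * ln (y+h)"
    using y assms by (intro add_strict_mono mult_strict_left_mono) auto
  then show ?thesis using True by (simp add: algebra_simps)
next
  case False
  hence x: "x > 0" using assms by simp
  let ?f = "\<lambda>t::real. (t+h)*ln(t+h) - t*ln t"
  have "?f x < ?f y"
  proof (rule DERIV_pos_imp_increasing[OF assms(2)])
    fix t assume t: "x \<le> t" "t \<le> y"
    hence tp: "t > 0" using x by simp
    have "DERIV ?f t :> ((1 * ln (t+h) + (t+h) * (1/(t+h))) - (1 * ln t + t * (1/t)))"
      using tp assms by (auto intro!: derivative_eq_intros)
    moreover have "((1 * ln (t+h) + (t+h) * (1/(t+h))) - (1 * ln t + t * (1/t))) = ln (t+h) - ln t"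
      using tp assms by simp
    moreover have "ln (t+h) - ln t > 0" using tp assms by simp
    ultimately show "\<exists>y. DERIV ?f t :> y \<and> y > 0" by metis
  qed
  thus ?thesis by simp
qed

lemma g_incr:
  fixes x y h :: real
  assumes "0 \<le> x" "x \<le> y" "0 \<le> h"
  shows "(x+h)*ln(x+h) - x*ln x \<le> (y+h)*ln(y+h) - y*ln y"
  using g_incr_strict[of x y h] assms by (cases "x = y"; cases "h = 0") auto



lemma four_ineq:
  fixes d z u v :: real
  assumes "u \<le> d" "v \<le> d" "0 < u" "0 < v" "0 \<le> z"
  shows "d*ln d + z*ln z + u*ln u + v*ln v <
    (d + min u v)*ln (d + min u v) + (z + min u v)*ln (z + min u v)
    + (u - min u v)*ln (u - min u v) + (v - min u v)*ln (v - min u v)"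
proof (cases "v \<le> u")
  case True
  have s: "(u-v+v)*ln(u-v+v) - (u-v)*ln (u-v) < (d+v)*ln(d+v) - d*ln d"
    using g_incr_strict[of "u-v" d v] assms True by simp
  have n: "(0+v)*ln(0+v) - 0*ln 0 \<le> (z+v)*ln(z+v) - z*ln z"
    using g_incr[of 0 z v] assms by simp
  have b: "min u v = v" using True by simp
  show ?thesis using s n by (simp add: b)
next
  case False
  have s: "(v-u+u)*ln(v-u+u) - (v-u)*ln (v-u) < (d+u)*ln(d+u) - d*ln d"
    using g_incr_strict[of "v-u" d u] assms False by simp
  have n: "(0+u)*ln(0+u) - 0*ln 0 \<le> (z+u)*ln(z+u) - z*ln z"
    using g_incr[of 0 z u] assms by simp
  have b: "min u v = u" using False by simp
  show ?thesis using s n by (simp add: b)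
qed

lemma sum_local4:
  fixes D :: "nat \<Rightarrow> nat \<Rightarrow> real"
  assumes "i1 < m" "i2 < m" "i1 \<noteq> i2" "j1 < n" "j2 < n" "j1 \<noteq> j2"
    and "\<And>i j. \<not> ((i = i1 \<or> i = i2) \<and> (j = j1 \<or> j = j2)) \<Longrightarrow> D i j = 0"
  shows "(\<Sum>i<m. \<Sum>j<n. D i j) = D i1 j1 + D i1 j2 + D i2 j1 + D i2 j2"
proof -
  have "(\<Sum>i<m. \<Sum>j<n. D i j) = (\<Sum>i\<in>{i1,i2}. \<Sum>j<n. D i j)"
  proof (rule sum.mono_neutral_right)
    show "\<forall>i\<in>{..<m} - {i1, i2}. (\<Sum>j<n. D i j) = 0"
    proof
      fix i assume "i \<in> {..<m} - {i1, i2}"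
      hence "\<forall>j\<in>{..<n}. D i j = 0" using assms(7) by auto
      thus "(\<Sum>j<n. D i j) = 0" by simp
    qed
  qed (use assms in auto)
  also have "\<dots> = (\<Sum>i\<in>{i1,i2}. \<Sum>j\<in>{j1,j2}. D i j)"
    by (rule sum.cong[OF refl], rule sum.mono_neutral_right) (use assms in auto)
  finally show ?thesis using assms by simp
qed

lemma entropy_swap2:
  assumes "i1 < m" "i2 < m" "i1 \<noteq> i2" "j1 < n" "j2 < n" "j1 \<noteq> j2"
    and "P i1 j2 \<le> P i1 j1" "P i2 j1 \<le> P i1 j1" "0 < P i1 j2" "0 < P i2 j1" "0 \<le> P i2 j2"
  shows "entropy m n (swap2 P i1 i2 j1 j2) < entropy m n P"
proof -
  let ?Q = "swap2 P i1 i2 j1 j2"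
  let ?D = "\<lambda>i j. ?Q i j * ln (?Q i j) - P i j * ln (P i j)"
  have D: "(\<Sum>i<m. \<Sum>j<n. ?D i j) = ?D i1 j1 + ?D i1 j2 + ?D i2 j1 + ?D i2 j2"
    by (rule sum_local4) (use assms in \<open>auto simp: swap2_def Let_def\<close>)
  have e: "entropy m n ?Q - entropy m n P = - (\<Sum>i<m. \<Sum>j<n. ?D i j)"
    unfolding entropy_def by (simp add: sum_subtractf)
  have "?D i1 j1 + ?D i1 j2 + ?D i2 j1 + ?D i2 j2 > 0"
    using four_ineq[of "P i1 j2" "P i1 j1" "P i2 j1" "P i2 j2"] assms
    by (simp add: swap2_def Let_def algebra_simps)
  thus ?thesis using e D by simp
qed



definition Sc :: "(nat \<Rightarrow> nat \<Rightarrow> real) \<Rightarrow> nat set \<Rightarrow> nat set \<Rightarrow> (nat \<times> nat) set" where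
  "Sc P R C = {(i, j). i \<in> R \<and> j \<in> C \<and> P i j \<noteq> 0}"

lemma Sc_finite: "finite R \<Longrightarrow> finite C \<Longrightarrow> finite (Sc P R C)"
  by (rule finite_subset[of _ "R \<times> C"]) (auto simp: Sc_def)

definition good :: "(nat \<Rightarrow> nat \<Rightarrow> real) \<Rightarrow> nat set \<Rightarrow> nat set \<Rightarrow> bool" where
  "good P R' C' \<longleftrightarrow> Sc P R' C' \<noteq> {} \<and>
     (\<forall>i\<in>R'. \<forall>j\<in>C'. P i j \<noteq> 0 \<longrightarrow> (\<exists>j'\<in>C'. j' \<noteq> j \<and> P i j' \<noteq> 0)) \<and>
     (\<forall>i\<in>R'. \<forall>j\<in>C'. P i j \<noteq> 0 \<longrightarrow> (\<exists>i'\<in>R'. i' \<noteq> i \<and> P i' j \<noteq> 0))"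

lemma core:
  assumes "finite R" "finite C" "card (Sc P R C) \<ge> card R + card C" "R \<noteq> {} \<or> C \<noteq> {}"
  shows "\<exists>R'\<subseteq>R. \<exists>C'\<subseteq>C. good P R' C'"
  using assms
proof (induction "card R + card C" arbitrary: R C rule: less_induct)
  case less
  show ?case
  proof (cases "\<exists>i\<in>R. \<exists>j\<in>C. P i j \<noteq> 0 \<and> (\<forall>j'\<in>C. j' \<noteq> j \<longrightarrow> P i j' = 0)")
    case True
    then obtain i j where ij: "i \<in> R" "j \<in> C" "P i j \<noteq> 0" "\<forall>j'\<in>C. j' \<noteq> j \<longrightarrow> P i j' = 0" by blast
    let ?R0 = "R - {i}"
    have sub: "Sc P R C \<subseteq> insert (i,j) (Sc P ?R0 C)" using ij by (auto simp: Sc_def)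
    have fin: "finite (Sc P ?R0 C)" using less.prems(1,2) by (intro Sc_finite) auto
    have "card (Sc P R C) \<le> card (insert (i,j) (Sc P ?R0 C))"
      using card_mono[OF _ sub] fin by simp
    also have "\<dots> \<le> card (Sc P ?R0 C) + 1" by (simp add: card_insert_le_m1 card_insert_if)
    finally have c1: "card (Sc P R C) \<le> card (Sc P ?R0 C) + 1" .
    have "card R > 0" using ij less.prems(1) by (auto simp: card_gt_0_iff)
    hence cr: "card ?R0 + 1 = card R" using ij(1) by (simp add: card_Diff_singleton)
    have "\<exists>R'\<subseteq>?R0. \<exists>C'\<subseteq>C. good P R' C'"
    proof (rule less.hyps)
      show "card ?R0 + card C < card R + card C" using cr by linarith
      show "finite ?R0" using less.prems by simp
      show "finite C" using less.prems by simp
      show "card ?R0 + card C \<le> card (Sc P ?R0 C)" using c1 cr less.prems(3) by linarith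
      show "?R0 \<noteq> {} \<or> C \<noteq> {}" using ij by blast
    qed
    thus ?thesis by blast
  next
    case F1: False
    show ?thesis
    proof (cases "\<exists>j\<in>C. \<exists>i\<in>R. P i j \<noteq> 0 \<and> (\<forall>i'\<in>R. i' \<noteq> i \<longrightarrow> P i' j = 0)")
      case True
      then obtain i j where ij: "i \<in> R" "j \<in> C" "P i j \<noteq> 0" "\<forall>i'\<in>R. i' \<noteq> i \<longrightarrow> P i' j = 0" by blast
      let ?C0 = "C - {j}"
      have sub: "Sc P R C \<subseteq> insert (i,j) (Sc P R ?C0)" using ij by (auto simp: Sc_def)
      have fin: "finite (Sc P R ?C0)" using less.prems(1,2) by (intro Sc_finite) auto
      have "card (Sc P R C) \<le> card (insert (i,j) (Sc P R ?C0))"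
        using card_mono[OF _ sub] fin by simp
      also have "\<dots> \<le> card (Sc P R ?C0) + 1" using fin by (simp add: card_insert_if)
      finally have c1: "card (Sc P R C) \<le> card (Sc P R ?C0) + 1" .
      have "card C > 0" using ij less.prems(2) by (auto simp: card_gt_0_iff)
      hence cr: "card ?C0 + 1 = card C" using ij(2) by (simp add: card_Diff_singleton)
      have "\<exists>R'\<subseteq>R. \<exists>C'\<subseteq>?C0. good P R' C'"
      proof (rule less.hyps)
        show "card R + card ?C0 < card R + card C" using cr by linarith
        show "finite R" using less.prems by simp
        show "finite ?C0" using less.prems by simp
        show "card R + card ?C0 \<le> card (Sc P R ?C0)" using c1 cr less.prems(3) by linarith
        show "R \<noteq> {} \<or> ?C0 \<noteq> {}" using ij by blast
      qed
      thus ?thesis by blast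
    next
      case F2: False
      have "card R + card C > 0" using less.prems(1,2,4) by (auto simp: card_gt_0_iff)
      hence "Sc P R C \<noteq> {}" using less.prems(3) by auto
      moreover have "\<forall>i\<in>R. \<forall>j\<in>C. P i j \<noteq> 0 \<longrightarrow> (\<exists>j'\<in>C. j' \<noteq> j \<and> P i j' \<noteq> 0)"
        using F1 by blast
      moreover have "\<forall>i\<in>R. \<forall>j\<in>C. P i j \<noteq> 0 \<longrightarrow> (\<exists>i'\<in>R. i' \<noteq> i \<and> P i' j \<noteq> 0)"
        using F2 by blast
      ultimately have "good P R C" by (simp add: good_def)
      thus ?thesis by blast
    qed
  qed
qed

lemma upper:
  assumes "coupling m n p q P" "local_optimal m n p q P" "m \<ge> 2"
  shows "card (supp m n P) < m + n"
proof (rule ccontr)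
  assume "\<not> card (supp m n P) < m + n"
  hence c: "card (Sc P {..<m} {..<n}) \<ge> card {..<m} + card {..<n}"
    by (simp add: supp_def Sc_def)
  have nn: "\<And>i j. i < m \<Longrightarrow> j < n \<Longrightarrow> P i j \<ge> 0" using assms(1) by (simp add: coupling_def)
  have "{..<m} \<noteq> {} \<or> {..<n} \<noteq> {}" using assms(3) lessThan_empty_iff by (metis not_numeral_le_zero)
  then obtain R' C' where RC0: "R' \<subseteq> {..<m}" "C' \<subseteq> {..<n}" "good P R' C'"
    using core[OF _ _ c] by blast
  note G = RC0(3)[unfolded good_def]
  note RC = RC0(1,2) conjunct1[OF G] conjunct1[OF conjunct2[OF G]] conjunct2[OF conjunct2[OF G]]
  let ?T = "Sc P R' C'"
  let ?f = "\<lambda>x. P (fst x) (snd x)"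
  have fT: "finite ?T" using RC by (intro Sc_finite) (auto intro: finite_subset)
  have "Max (?f ` ?T) \<in> ?f ` ?T" using fT RC(3) by (intro Max_in) auto
  then obtain x where x: "x \<in> ?T" "?f x = Max (?f ` ?T)" by auto
  obtain r c where xrc: "x = (r, c)" by (cases x)
  have mx: "\<And>i j. (i,j) \<in> ?T \<Longrightarrow> P i j \<le> P r c"
  proof -
    fix i j assume "(i,j) \<in> ?T"
    hence "?f (i,j) \<le> Max (?f ` ?T)" using fT by (intro Max_ge) (auto intro: image_eqI[where x="(i,j)"])
    thus "P i j \<le> P r c" using x xrc by simp
  qed
  have rc: "r \<in> R'" "c \<in> C'" "P r c \<noteq> 0" using x xrc by (auto simp: Sc_def)
  obtain c' where c': "c' \<in> C'" "c' \<noteq> c" "P r c' \<noteq> 0" using RC(4) rc by blast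
  obtain r' where r': "r' \<in> R'" "r' \<noteq> r" "P r' c \<noteq> 0" using RC(5) rc by blast
  have bnd: "r < m" "r' < m" "c < n" "c' < n" using rc c' r' RC by auto
  have u: "P r c' > 0" using nn[of r c'] bnd c' by simp
  have v: "P r' c > 0" using nn[of r' c] bnd r' by simp
  have ule: "P r c' \<le> P r c" using mx[of r c'] rc c' by (simp add: Sc_def)
  have vle: "P r' c \<le> P r c" using mx[of r' c] r' rc by (simp add: Sc_def)
  have z: "P r' c' \<ge> 0" using nn bnd by simp
  have mv: "move m n P (swap2 P r r' c c')"
    unfolding move_def row_move_def move1_def
  proof (intro disjI1 exI conjI)
    show "max (P r c') (P r' c) \<le> max (P r c) (P r' c')" using ule vle by (simp add: le_max_iff_disj)
  qed (use bnd r' c' in auto)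
  have "entropy m n (swap2 P r r' c c') < entropy m n P"
    by (rule entropy_swap2) (use bnd r' c' ule vle u v z in auto)
  thus False using mv assms(2) by (auto simp: local_optimal_def)
qed



lemma labeling:
  fixes S :: "(nat \<times> nat) set" and V :: "nat set"
  assumes "finite S" "finite V"
  shows "\<exists>lab::nat\<Rightarrow>nat. (\<forall>(i,j)\<in>S. lab (2*i) = lab (2*j+1)) \<and> card V \<le> card (lab ` V) + card S"
  using assms(1)
proof (induction S rule: finite_induct)
  case empty
  show ?case by (rule exI[of _ id]) simp
next
  case (insert e S)
  obtain lab :: "nat \<Rightarrow> nat" where lab: "\<forall>(i,j)\<in>S. lab (2*i) = lab (2*j+1)" "card V \<le> card (lab ` V) + card S"
    using insert.IH by blast
  obtain i j where e: "e = (i,j)" by (cases e)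
  define lab' where "lab' x = (if lab x = lab (2*j+1) then lab (2*i) else lab x)" for x
  have "lab ` V \<subseteq> insert (lab (2*j+1)) (lab' ` V)"
  proof
    fix y assume "y \<in> lab ` V"
    then obtain x where x: "x \<in> V" "y = lab x" by blast
    show "y \<in> insert (lab (2*j+1)) (lab' ` V)"
    proof (cases "lab x = lab (2*j+1)")
      case True thus ?thesis using x by simp
    next
      case False
      hence "lab' x = y" using x by (simp add: lab'_def)
      thus ?thesis using x by blast
    qed
  qed
  hence "card (lab ` V) \<le> card (insert (lab (2*j+1)) (lab' ` V))"
    using assms(2) by (intro card_mono) auto
  also have "\<dots> \<le> card (lab' ` V) + 1" using assms(2) by (simp add: card_insert_if)
  finally have c: "card (lab ` V) \<le> card (lab' ` V) + 1" .
  have "card (insert e S) = card S + 1" using insert by simp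
  hence cV: "card V \<le> card (lab' ` V) + card (insert e S)" using c lab(2) by linarith
  have "\<forall>(a,b)\<in>insert e S. lab' (2*a) = lab' (2*b+1)"
  proof
    fix x assume x: "x \<in> insert e S"
    obtain a b where ab: "x = (a,b)" by (cases x)
    show "case x of (a, b) \<Rightarrow> lab' (2*a) = lab' (2*b+1)"
    proof (cases "x = e")
      case True thus ?thesis using ab e by (simp add: lab'_def)
    next
      case False
      hence "(a,b) \<in> S" using x ab by simp
      hence "lab (2*a) = lab (2*b+1)" using lab(1) by blast
      thus ?thesis using ab by (simp add: lab'_def)
    qed
  qed
  thus ?case using cV by blast
qed

lemma sum_list_concat_map:
  "sum_list (map w (concat L)) = sum_list (map (\<lambda>b. sum_list (map w b)) L)"
  by (induction L) auto

lemma sum_list_take_nth: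
  "t \<le> length L \<Longrightarrow> sum_list (map g (take t L)) = (\<Sum>s<t. g (L ! s))"
proof (induction t)
  case 0 thus ?case by simp
next
  case (Suc t)
  hence "take (Suc t) L = take t L @ [L ! t]" by (simp add: take_Suc_conv_app_nth)
  thus ?case using Suc by simp
qed

lemma blocks:
  fixes F :: "nat \<Rightarrow> nat set" and w :: "nat \<Rightarrow> real" and ls :: "nat list" and N :: nat
  assumes dl: "distinct ls"
    and ne: "\<And>l. l \<in> set ls \<Longrightarrow> F l \<noteq> {}"
    and sb: "\<And>l. l \<in> set ls \<Longrightarrow> F l \<subseteq> {..<N}"
    and dj: "\<And>l1 l2. l1 \<in> set ls \<Longrightarrow> l2 \<in> set ls \<Longrightarrow> l1 \<noteq> l2 \<Longrightarrow> F l1 \<inter> F l2 = {}"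
    and un: "(\<Union>l\<in>set ls. F l) = {..<N}"
  shows "\<exists>\<sigma>. \<sigma> permutes {..<N} \<and>
    (\<forall>t. 1 \<le> t \<longrightarrow> t < length ls \<longrightarrow> (\<Sum>s<t. sum w (F (ls ! s))) \<in> partial_sums N w \<sigma>)"
proof -
  have fin: "\<And>l. l \<in> set ls \<Longrightarrow> finite (F l)" using sb by (meson finite_lessThan finite_subset)
  define G where "G l = sorted_list_of_set (F l)" for l
  define BR where "BR = map G ls"
  define xs where "xs = concat BR"
  have sG: "\<And>l. l \<in> set ls \<Longrightarrow> set (G l) = F l" using fin by (simp add: G_def)
  have dG: "\<And>l. distinct (G l)" by (simp add: G_def)
  have setxs: "set xs = {..<N}" using un sG by (simp add: xs_def BR_def)
  have nilBR: "[] \<notin> set BR"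
  proof
    assume "[] \<in> set BR"
    then obtain l where l: "l \<in> set ls" "G l = []" by (auto simp: BR_def)
    have "F l = {}" using sG[OF l(1)] l(2) by simp
    thus False using ne[OF l(1)] by simp
  qed
  have injG: "inj_on G (set ls)"
  proof (rule inj_onI)
    fix l1 l2 assume l: "l1 \<in> set ls" "l2 \<in> set ls" "G l1 = G l2"
    hence "F l1 = F l2" using sG[OF l(1)] sG[OF l(2)] l(3) by simp
    thus "l1 = l2" using dj[OF l(1,2)] ne[OF l(1)] by blast
  qed
  have dxs: "distinct xs"
    unfolding xs_def distinct_concat_iff
  proof (intro conjI allI impI)
    have "removeAll [] BR = BR" using nilBR by (simp add: removeAll_id)
    thus "distinct (removeAll [] BR)" using dl injG by (simp add: BR_def distinct_map)
  next
    fix ys assume "ys \<in> set BR" thus "distinct ys" using dG by (auto simp: BR_def)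
  next
    fix ys zs assume a: "ys \<in> set BR \<and> zs \<in> set BR \<and> ys \<noteq> zs"
    then obtain l1 l2 where l: "l1 \<in> set ls" "l2 \<in> set ls" "ys = G l1" "zs = G l2" by (auto simp: BR_def)
    hence "l1 \<noteq> l2" using a by auto
    thus "set ys \<inter> set zs = {}" using dj[OF l(1,2)] sG[OF l(1)] sG[OF l(2)] l(3,4) by simp
  qed
  have lxs: "length xs = N" using distinct_card[OF dxs] setxs by simp
  define \<sigma> where "\<sigma> k = (if k < N then xs ! k else k)" for k
  have "bij_betw ((!) xs) {..<N} {..<N}" using bij_betw_nth[OF dxs] lxs setxs by simp
  hence "bij_betw \<sigma> {..<N} {..<N}" by (rule bij_betw_cong[THEN iffD1, rotated]) (simp add: \<sigma>_def)
  hence perm: "\<sigma> permutes {..<N}" by (rule bij_imp_permutes) (simp add: \<sigma>_def)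
  have "(\<Sum>s<t. sum w (F (ls ! s))) \<in> partial_sums N w \<sigma>" if t: "1 \<le> t" "t < length ls" for t
  proof -
    define a where "a = length (concat (take t BR))"
    have lBR: "length BR = length ls" by (simp add: BR_def)
    have split: "xs = concat (take t BR) @ concat (drop t BR)"
      by (simp add: xs_def flip: concat_append)
    have "take a (concat (take t BR) @ concat (drop t BR)) = concat (take t BR)" by (simp add: a_def)
    hence tk: "take a xs = concat (take t BR)" using split by simp
    have "take t BR ! 0 \<in> set (take t BR)" using t lBR by (intro nth_mem) simp
    hence m0: "BR ! 0 \<in> set (take t BR)" using t by simp
    hence "BR ! 0 \<in> set BR" by (rule in_set_takeD)
    hence "BR ! 0 \<noteq> []" using nilBR by auto
    hence "concat (take t BR) \<noteq> []" using m0 by auto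
    hence a1: "1 \<le> a" by (simp add: a_def Suc_le_eq)
    have "drop t BR ! 0 \<in> set (drop t BR)" using t lBR by (intro nth_mem) simp
    hence m1: "BR ! t \<in> set (drop t BR)" using t lBR by simp
    hence "BR ! t \<in> set BR" by (rule in_set_dropD)
    hence "BR ! t \<noteq> []" using nilBR by auto
    hence "concat (drop t BR) \<noteq> []" using m1 by auto
    hence "length (concat (drop t BR)) > 0" by simp
    moreover have "length xs = a + length (concat (drop t BR))" using split a_def by (metis length_append)
    ultimately have aN: "a < N" using lxs by linarith
    have "(\<Sum>k<a. w (\<sigma> k)) = (\<Sum>k<a. w (xs ! k))" using aN by (intro sum.cong) (auto simp: \<sigma>_def)
    also have "\<dots> = sum_list (map w (take a xs))"
      using sum_list_take_nth[of a xs w] aN lxs by simp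
    also have "\<dots> = sum_list (map (\<lambda>b. sum_list (map w b)) (take t BR))"
      by (simp add: tk sum_list_concat_map)
    also have "\<dots> = (\<Sum>s<t. sum_list (map w (BR ! s)))"
      using sum_list_take_nth[of t BR "\<lambda>b. sum_list (map w b)"] t lBR by simp
    also have "\<dots> = (\<Sum>s<t. sum w (F (ls ! s)))"
    proof (rule sum.cong[OF refl])
      fix s assume "s \<in> {..<t}"
      hence s: "s < length ls" using t by simp
      hence "BR ! s = G (ls ! s)" by (simp add: BR_def)
      moreover have "ls ! s \<in> set ls" using s by simp
      ultimately show "sum_list (map w (BR ! s)) = sum w (F (ls ! s))"
        using sG dG by (simp add: sum_list_distinct_conv_sum_set)
    qed
    finally have eq: "(\<Sum>s<t. sum w (F (ls ! s))) = (\<Sum>k<a. w (\<sigma> k))" by simp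
    show ?thesis unfolding partial_sums_def using eq a1 aN by blast
  qed
  thus ?thesis using perm by blast
qed



lemma lower:
  assumes pp: "prob_vec m p" and pq: "prob_vec n q" and cp: "coupling m n p q P"
  shows "m + n \<le> kappa m n p q + card (supp m n P)"
proof -
  define V where "V = (\<lambda>i. 2*i) ` {..<m} \<union> (\<lambda>j. 2*j+1) ` {..<n}"
  have disj: "(\<lambda>i::nat. 2*i) ` {..<m} \<inter> (\<lambda>j. 2*j+1) ` {..<n} = {}" by auto presburger
  have "card ((\<lambda>i::nat. 2*i) ` {..<m}) = m" by (subst card_image) (auto simp: inj_on_def)
  moreover have "card ((\<lambda>j::nat. 2*j+1) ` {..<n}) = n" by (subst card_image) (auto simp: inj_on_def)
  ultimately have cardV: "card V = m + n" unfolding V_def using disj by (simp add: card_Un_disjoint)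
  have finV: "finite V" by (simp add: V_def)
  have finS: "finite (supp m n P)"
    by (rule finite_subset[of _ "{..<m} \<times> {..<n}"]) (auto simp: supp_def)
  obtain lab :: "nat \<Rightarrow> nat" where lab: "\<forall>(i,j)\<in>supp m n P. lab (2*i) = lab (2*j+1)"
     "card V \<le> card (lab ` V) + card (supp m n P)"
    using labeling[OF finS finV] by blast
  define \<Lambda> where "\<Lambda> = lab ` V"
  have finL: "finite \<Lambda>" using finV by (simp add: \<Lambda>_def)
  define Rw where "Rw l = {i. i < m \<and> lab (2*i) = l}" for l
  define Cl where "Cl l = {j. j < n \<and> lab (2*j+1) = l}" for l
  have finR: "finite (Rw l)" for l by (rule finite_subset[of _ "{..<m}"]) (auto simp: Rw_def)
  have finC: "finite (Cl l)" for l by (rule finite_subset[of _ "{..<n}"]) (auto simp: Cl_def)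
  have edge: "lab (2*i) = lab (2*j+1)" if "i < m" "j < n" "P i j \<noteq> 0" for i j
    using lab(1) that by (auto simp: supp_def)
  have ppos: "\<And>i. i < m \<Longrightarrow> p i > 0" using pp by (simp add: prob_vec_def)
  have qpos: "\<And>j. j < n \<Longrightarrow> q j > 0" using pq by (simp add: prob_vec_def)
  have rs: "\<And>i. i < m \<Longrightarrow> (\<Sum>j<n. P i j) = p i" using cp by (simp add: coupling_def)
  have cs: "\<And>j. j < n \<Longrightarrow> (\<Sum>i<m. P i j) = q j" using cp by (simp add: coupling_def)
  have rowpos: "\<exists>j<n. P i j \<noteq> 0" if "i < m" for i
  proof (rule ccontr)
    assume "\<not> ?thesis"
    hence "(\<Sum>j<n. P i j) = 0" by simp
    thus False using rs[OF that] ppos[OF that] by simp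
  qed
  have colpos: "\<exists>i<m. P i j \<noteq> 0" if "j < n" for j
  proof (rule ccontr)
    assume "\<not> ?thesis"
    hence "(\<Sum>i<m. P i j) = 0" by simp
    thus False using cs[OF that] qpos[OF that] by simp
  qed
  have ne: "Rw l \<noteq> {} \<and> Cl l \<noteq> {}" if lL: "l \<in> \<Lambda>" for l
  proof -
    obtain x where x: "x \<in> V" "l = lab x" using lL by (auto simp: \<Lambda>_def)
    show ?thesis
    proof (cases "x \<in> (\<lambda>i. 2*i) ` {..<m}")
      case True
      then obtain i where i: "i < m" "x = 2*i" by auto
      obtain j where j: "j < n" "P i j \<noteq> 0" using rowpos[OF i(1)] by blast
      have "i \<in> Rw l" using i x by (simp add: Rw_def)
      moreover have "j \<in> Cl l" using edge[OF i(1) j(1,2)] i x j by (simp add: Cl_def)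
      ultimately show ?thesis by blast
    next
      case False
      then obtain j where j: "j < n" "x = 2*j+1" using x V_def by auto
      obtain i where i: "i < m" "P i j \<noteq> 0" using colpos[OF j(1)] by blast
      have "j \<in> Cl l" using j x by (simp add: Cl_def)
      moreover have "i \<in> Rw l" using edge[OF i(1) j(1) i(2)] i x j by (simp add: Rw_def)
      ultimately show ?thesis by blast
    qed
  qed
  have bal: "sum p (Rw l) = sum q (Cl l)" for l
  proof -
    have "sum p (Rw l) = (\<Sum>i\<in>Rw l. \<Sum>j<n. P i j)" using rs by (intro sum.cong) (auto simp: Rw_def)
    also have "\<dots> = (\<Sum>i\<in>Rw l. \<Sum>j\<in>Cl l. P i j)"
    proof (rule sum.cong[OF refl])
      fix i assume i: "i \<in> Rw l"
      show "(\<Sum>j<n. P i j) = (\<Sum>j\<in>Cl l. P i j)"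
      proof (rule sum.mono_neutral_right)
        show "\<forall>j\<in>{..<n} - Cl l. P i j = 0"
        proof
          fix j assume "j \<in> {..<n} - Cl l"
          hence j: "j < n" "lab (2*j+1) \<noteq> l" by (auto simp: Cl_def)
          have ii: "i < m" "lab (2*i) = l" using i by (auto simp: Rw_def)
          show "P i j = 0"
          proof (rule ccontr)
            assume "P i j \<noteq> 0"
            hence "lab (2*i) = lab (2*j+1)" using edge ii j by blast
            thus False using ii j by simp
          qed
        qed
      qed (auto simp: Cl_def)
    qed
    also have "\<dots> = (\<Sum>j\<in>Cl l. \<Sum>i\<in>Rw l. P i j)" by (rule sum.swap)
    also have "\<dots> = (\<Sum>j\<in>Cl l. \<Sum>i<m. P i j)"
    proof (rule sum.cong[OF refl])
      fix j assume j: "j \<in> Cl l"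
      show "(\<Sum>i\<in>Rw l. P i j) = (\<Sum>i<m. P i j)"
      proof (rule sum.mono_neutral_left)
        show "\<forall>i\<in>{..<m} - Rw l. P i j = 0"
        proof
          fix i assume "i \<in> {..<m} - Rw l"
          hence ii: "i < m" "lab (2*i) \<noteq> l" by (auto simp: Rw_def)
          have jj: "j < n" "lab (2*j+1) = l" using j by (auto simp: Cl_def)
          show "P i j = 0"
          proof (rule ccontr)
            assume "P i j \<noteq> 0"
            hence "lab (2*i) = lab (2*j+1)" using edge ii jj by blast
            thus False using ii jj by simp
          qed
        qed
      qed (auto simp: Rw_def)
    qed
    also have "\<dots> = sum q (Cl l)" using cs by (intro sum.cong) (auto simp: Cl_def)
    finally show ?thesis .
  qed
  define ls where "ls = sorted_list_of_set \<Lambda>"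
  have dl: "distinct ls" and sl: "set ls = \<Lambda>" using finL by (auto simp: ls_def)
  define c where "c = card \<Lambda>"
  have lc: "length ls = c" using finL by (simp add: ls_def c_def)
  obtain \<sigma> where \<sigma>: "\<sigma> permutes {..<m}"
    "\<forall>t. 1 \<le> t \<longrightarrow> t < length ls \<longrightarrow> (\<Sum>s<t. sum p (Rw (ls ! s))) \<in> partial_sums m p \<sigma>"
  proof -
    have "\<exists>\<sigma>. \<sigma> permutes {..<m} \<and>
      (\<forall>t. 1 \<le> t \<longrightarrow> t < length ls \<longrightarrow> (\<Sum>s<t. sum p (Rw (ls ! s))) \<in> partial_sums m p \<sigma>)"
    proof (rule blocks[OF dl])
      show "\<And>l. l \<in> set ls \<Longrightarrow> Rw l \<noteq> {}" using ne sl by blast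
      show "\<And>l. l \<in> set ls \<Longrightarrow> Rw l \<subseteq> {..<m}" by (auto simp: Rw_def)
      show "\<And>l1 l2. l1 \<in> set ls \<Longrightarrow> l2 \<in> set ls \<Longrightarrow> l1 \<noteq> l2 \<Longrightarrow> Rw l1 \<inter> Rw l2 = {}"
        by (auto simp: Rw_def)
      show "(\<Union>l\<in>set ls. Rw l) = {..<m}" using sl by (auto simp: Rw_def \<Lambda>_def V_def)
    qed
    thus ?thesis using that by blast
  qed
  obtain \<pi> where \<pi>: "\<pi> permutes {..<n}"
    "\<forall>t. 1 \<le> t \<longrightarrow> t < length ls \<longrightarrow> (\<Sum>s<t. sum q (Cl (ls ! s))) \<in> partial_sums n q \<pi>"
  proof -
    have "\<exists>\<pi>. \<pi> permutes {..<n} \<and>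
      (\<forall>t. 1 \<le> t \<longrightarrow> t < length ls \<longrightarrow> (\<Sum>s<t. sum q (Cl (ls ! s))) \<in> partial_sums n q \<pi>)"
    proof (rule blocks[OF dl])
      show "\<And>l. l \<in> set ls \<Longrightarrow> Cl l \<noteq> {}" using ne sl by blast
      show "\<And>l. l \<in> set ls \<Longrightarrow> Cl l \<subseteq> {..<n}" by (auto simp: Cl_def)
      show "\<And>l1 l2. l1 \<in> set ls \<Longrightarrow> l2 \<in> set ls \<Longrightarrow> l1 \<noteq> l2 \<Longrightarrow> Cl l1 \<inter> Cl l2 = {}"
        by (auto simp: Cl_def)
      show "(\<Union>l\<in>set ls. Cl l) = {..<n}" using sl by (auto simp: Cl_def \<Lambda>_def V_def)
    qed
    thus ?thesis using that by blast
  qed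
  define W where "W t = (\<Sum>s<t. sum p (Rw (ls ! s)))" for t
  have Wq: "W t = (\<Sum>s<t. sum q (Cl (ls ! s)))" for t by (simp add: W_def bal)
  have blockpos: "sum p (Rw (ls ! s)) > 0" if "s < c" for s
  proof -
    have "ls ! s \<in> \<Lambda>" using that lc sl nth_mem by metis
    hence "Rw (ls ! s) \<noteq> {}" using ne by blast
    thus ?thesis using finR ppos by (intro sum_pos) (auto simp: Rw_def)
  qed
  have Wmono: "W t < W t'" if "t < t'" "t' \<le> c" for t t'
  proof -
    have "W t' = (\<Sum>s\<in>{..<t'} - {..<t}. sum p (Rw (ls ! s))) + W t"
      unfolding W_def using that by (intro sum.subset_diff) auto
    moreover have "(\<Sum>s\<in>{..<t'} - {..<t}. sum p (Rw (ls ! s))) > 0"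
      using that by (intro sum_pos blockpos) auto
    ultimately show ?thesis by simp
  qed
  have injW: "inj_on W {1..<c}"
  proof (rule inj_onI)
    fix t t' assume a: "t \<in> {1..<c}" "t' \<in> {1..<c}" "W t = W t'"
    show "t = t'"
    proof (rule ccontr)
      assume "t \<noteq> t'"
      hence "t < t' \<or> t' < t" by arith
      thus False using Wmono a by fastforce
    qed
  qed
  have sub: "W ` {1..<c} \<subseteq> partial_sums m p \<sigma> \<inter> partial_sums n q \<pi>"
  proof
    fix x assume "x \<in> W ` {1..<c}"
    then obtain t where t: "1 \<le> t" "t < c" "x = W t" by auto
    show "x \<in> partial_sums m p \<sigma> \<inter> partial_sums n q \<pi>"
    proof
      show "x \<in> partial_sums m p \<sigma>" using \<sigma>(2) t lc by (simp add: W_def)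
      show "x \<in> partial_sums n q \<pi>" using \<pi>(2) t lc Wq[of t] by simp
    qed
  qed
  have finPS: "finite (partial_sums k w \<tau>)" for k w \<tau>
    by (rule finite_subset[of _ "(\<lambda>i. \<Sum>k<i. w (\<tau> k)) ` {..<k}"]) (auto simp: partial_sums_def)
  have "c - 1 \<le> card (partial_sums m p \<sigma> \<inter> partial_sums n q \<pi>)"
  proof -
    have "c - 1 = card (W ` {1..<c})" using injW by (simp add: card_image)
    also have "\<dots> \<le> card (partial_sums m p \<sigma> \<inter> partial_sums n q \<pi>)"
      using sub finPS by (intro card_mono) auto
    finally show ?thesis .
  qed
  moreover
  define K where "K = {card (partial_sums m p \<sigma> \<inter> partial_sums n q \<pi>) | \<sigma> \<pi>.
                         \<sigma> permutes {..<m} \<and> \<pi> permutes {..<n}}"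
  have finK: "finite K"
  proof (rule finite_subset)
    show "K \<subseteq> (\<lambda>(\<sigma>,\<pi>). card (partial_sums m p \<sigma> \<inter> partial_sums n q \<pi>)) `
        ({\<sigma>. \<sigma> permutes {..<m}} \<times> {\<pi>. \<pi> permutes {..<n}})" by (auto simp: K_def)
    show "finite ((\<lambda>(\<sigma>,\<pi>). card (partial_sums m p \<sigma> \<inter> partial_sums n q \<pi>)) `
        ({\<sigma>. \<sigma> permutes {..<m}} \<times> {\<pi>. \<pi> permutes {..<n}}))"
      by (intro finite_imageI finite_cartesian_product finite_permutations) auto
  qed
  have "card (partial_sums m p \<sigma> \<inter> partial_sums n q \<pi>) \<in> K" using \<sigma>(1) \<pi>(1) by (auto simp: K_def)
  hence "card (partial_sums m p \<sigma> \<inter> partial_sums n q \<pi>) \<le> Max K" using finK by (rule Max_ge[rotated])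
  ultimately have "c \<le> kappa m n p q" unfolding kappa_def K_def[symmetric] by linarith
  thus ?thesis using cardV lab(2) by (simp add: \<Lambda>_def c_def)
qed


theorem theorem2p2:
  fixes m n :: nat and p q :: "nat \<Rightarrow> real" and P :: "nat \<Rightarrow> nat \<Rightarrow> real"
  assumes "m \<ge> 2" and "n \<ge> 2"
    and "prob_vec m p" and "prob_vec n q"
    and "coupling m n p q P"
    and "local_optimal m n p q P"
  shows "int m + int n - int (kappa m n p q) \<le> int (card (supp m n P))
       \<and> card (supp m n P) \<le> m + n - 1"
proof
  have "m + n \<le> kappa m n p q + card (supp m n P)" using lower assms(3,4,5) by blast
  thus "int m + int n - int (kappa m n p q) \<le> int (card (supp m n P))" by linarith
  have "card (supp m n P) < m + n" using upper assms(5,6,1) by blast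
  thus "card (supp m n P) \<le> m + n - 1" by linarith
qed

end
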